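(* Let $T$ be a tree with diametral path $D = v_0 v_1\cdots v_d$. If for some $i$ there is a vertex $u \notin D$ protruding from $v_i$ with $d(u,v_i) = \ell > 2$ (i.e. a limb of length $\ell>2$ protrudes from $v_i$), then $T$ is not diametrical.
   Context: Let $G=(V,E)$ be a finite connected graph with distance $d(u,v)$, eccentricity $e(v)=\max_w d(v,w)$ and diameter $\mathrm{diam}(G)=\max_v e(v)$. A broadcast is a function $f: V\to\{0,\dots,\mathrm{diam}(G)\}$ with $f(v)\le e(v)$; its cost is $\sum_v f(v)$; it is dominating if every $u$ has some $v$ with $f(v)\ge 1$ and $d(u,v)\le f(v)$; a dominating broadcast is minimal if decreasing $f(v)$ for any $v$ with $f(v)>0$ destroys domination. $\Gamma_b(G)$ is the maximum cost of a minimal dominating broadcast, and $G$ is called diametrical if $\Gamma_b(G)=\mathrm{diam}(G)$. For a tree with fixed diametral path $D$, a vertex $u\notin D$ protrudes from $v_i\in D$ if $v_i$ is the vertex of $D$ closest to $u$. *)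

theory Defs
  imports Main
begin

text \<open>Finite simple graphs: a finite vertex set V and a symmetric irreflexive
adjacency relation E (only edges between vertices of V matter).\<close>

definition graph :: "'a set \<Rightarrow> ('a \<Rightarrow> 'a \<Rightarrow> bool) \<Rightarrow> bool" where
  "graph V E \<longleftrightarrow> finite V \<and> V \<noteq> {} \<and> (\<forall>x y. E x y \<longrightarrow> E y x) \<and> (\<forall>x. \<not> E x x)"

definition walk :: "'a set \<Rightarrow> ('a \<Rightarrow> 'a \<Rightarrow> bool) \<Rightarrow> 'a list \<Rightarrow> bool" where
  "walk V E xs \<longleftrightarrow> xs \<noteq> [] \<and> set xs \<subseteq> V \<and> (\<forall>i. Suc i < length xs \<longrightarrow> E (xs ! i) (xs ! Suc i))"

definition connected_graph :: "'a set \<Rightarrow> ('a \<Rightarrow> 'a \<Rightarrow> bool) \<Rightarrow> bool" where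
  "connected_graph V E \<longleftrightarrow> graph V E \<and>
     (\<forall>u\<in>V. \<forall>v\<in>V. \<exists>xs. walk V E xs \<and> hd xs = u \<and> last xs = v)"

definition has_cycle :: "'a set \<Rightarrow> ('a \<Rightarrow> 'a \<Rightarrow> bool) \<Rightarrow> bool" where
  "has_cycle V E \<longleftrightarrow> (\<exists>xs. walk V E xs \<and> distinct xs \<and> length xs \<ge> 3 \<and> E (last xs) (hd xs))"

definition tree :: "'a set \<Rightarrow> ('a \<Rightarrow> 'a \<Rightarrow> bool) \<Rightarrow> bool" where
  "tree V E \<longleftrightarrow> connected_graph V E \<and> \<not> has_cycle V E"

definition gdist :: "'a set \<Rightarrow> ('a \<Rightarrow> 'a \<Rightarrow> bool) \<Rightarrow> 'a \<Rightarrow> 'a \<Rightarrow> nat" where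
  "gdist V E u v = (LEAST n. \<exists>xs. walk V E xs \<and> hd xs = u \<and> last xs = v \<and> length xs = Suc n)"

definition ecc :: "'a set \<Rightarrow> ('a \<Rightarrow> 'a \<Rightarrow> bool) \<Rightarrow> 'a \<Rightarrow> nat" where
  "ecc V E v = Max ((\<lambda>w. gdist V E v w) ` V)"

definition diam :: "'a set \<Rightarrow> ('a \<Rightarrow> 'a \<Rightarrow> bool) \<Rightarrow> nat" where
  "diam V E = Max ((\<lambda>v. ecc V E v) ` V)"

definition broadcast :: "'a set \<Rightarrow> ('a \<Rightarrow> 'a \<Rightarrow> bool) \<Rightarrow> ('a \<Rightarrow> nat) \<Rightarrow> bool" where
  "broadcast V E f \<longleftrightarrow> (\<forall>v\<in>V. f v \<le> ecc V E v) \<and> (\<forall>v. v \<notin> V \<longrightarrow> f v = 0)"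

definition bcost :: "'a set \<Rightarrow> ('a \<Rightarrow> nat) \<Rightarrow> nat" where
  "bcost V f = (\<Sum>v\<in>V. f v)"

definition dominating :: "'a set \<Rightarrow> ('a \<Rightarrow> 'a \<Rightarrow> bool) \<Rightarrow> ('a \<Rightarrow> nat) \<Rightarrow> bool" where
  "dominating V E f \<longleftrightarrow> broadcast V E f \<and>
     (\<forall>u\<in>V. \<exists>v\<in>V. f v \<ge> 1 \<and> gdist V E u v \<le> f v)"

definition minimal_dominating :: "'a set \<Rightarrow> ('a \<Rightarrow> 'a \<Rightarrow> bool) \<Rightarrow> ('a \<Rightarrow> nat) \<Rightarrow> bool" where
  "minimal_dominating V E f \<longleftrightarrow> dominating V E f \<and>
     (\<forall>v\<in>V. \<forall>k. k < f v \<longrightarrow> \<not> dominating V E (f(v := k)))"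

definition upper_broadcast_number :: "'a set \<Rightarrow> ('a \<Rightarrow> 'a \<Rightarrow> bool) \<Rightarrow> nat" where
  "upper_broadcast_number V E = Max {bcost V f | f. minimal_dominating V E f}"

definition diametrical :: "'a set \<Rightarrow> ('a \<Rightarrow> 'a \<Rightarrow> bool) \<Rightarrow> bool" where
  "diametrical V E \<longleftrightarrow> upper_broadcast_number V E = diam V E"

definition diametral_path :: "'a set \<Rightarrow> ('a \<Rightarrow> 'a \<Rightarrow> bool) \<Rightarrow> 'a list \<Rightarrow> bool" where
  "diametral_path V E ps \<longleftrightarrow> walk V E ps \<and> distinct ps \<and> length ps = Suc (diam V E)
     \<and> gdist V E (hd ps) (last ps) = diam V E"

definition protrudes :: "'a set \<Rightarrow> ('a \<Rightarrow> 'a \<Rightarrow> bool) \<Rightarrow> 'a list \<Rightarrow> 'a \<Rightarrow> nat \<Rightarrow> bool" where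
  "protrudes V E ps u i \<longleftrightarrow> u \<in> V \<and> u \<notin> set ps \<and> i < length ps \<and>
     (\<forall>j<length ps. j \<noteq> i \<longrightarrow> gdist V E u (ps ! i) < gdist V E u (ps ! j))"

end

theory Submission
  imports Defs
begin


lemma walk_Nil[simp]: "\<not> walk V E []" by (simp add: walk_def)
lemma walk_single[simp]: "walk V E [x] \<longleftrightarrow> x \<in> V" by (simp add: walk_def)
lemma walk_Cons2: "walk V E (x # y # xs) \<longleftrightarrow> x \<in> V \<and> E x y \<and> walk V E (y # xs)"
proof
  assume h: "walk V E (x # y # xs)"
  have "E ((x#y#xs)!0) ((x#y#xs)!Suc 0)" using h unfolding walk_def by (metis length_Cons zero_less_Suc Suc_less_eq)
  moreover have "\<forall>i. Suc i < length (y#xs) \<longrightarrow> E ((y#xs)!i) ((y#xs)!Suc i)"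
  proof (intro allI impI)
    fix i assume "Suc i < length (y#xs)"
    hence "Suc (Suc i) < length (x#y#xs)" by simp
    hence "E ((x#y#xs)!Suc i) ((x#y#xs)!Suc (Suc i))" using h unfolding walk_def by blast
    thus "E ((y#xs)!i) ((y#xs)!Suc i)" by simp
  qed
  ultimately show "x \<in> V \<and> E x y \<and> walk V E (y # xs)" using h unfolding walk_def by auto
next
  assume h: "x \<in> V \<and> E x y \<and> walk V E (y # xs)"
  show "walk V E (x # y # xs)" unfolding walk_def
  proof (intro conjI allI impI)
    show "set (x#y#xs) \<subseteq> V" using h unfolding walk_def by auto
    fix i assume "Suc i < length (x#y#xs)"
    thus "E ((x#y#xs)!i) ((x#y#xs)!Suc i)" using h unfolding walk_def
      by (cases i) auto
  qed simp
qed

lemma walk_set: "walk V E xs \<Longrightarrow> set xs \<subseteq> V" by (simp add: walk_def)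
lemma walk_ne: "walk V E xs \<Longrightarrow> xs \<noteq> []" by (simp add: walk_def)

lemma walk_mono: "walk V' E xs \<Longrightarrow> V' \<subseteq> V \<Longrightarrow> walk V E xs"
  unfolding walk_def by auto

lemma walk_restrict: "walk V E xs \<Longrightarrow> set xs \<subseteq> V' \<Longrightarrow> walk V' E xs"
  unfolding walk_def by auto

lemma walk_append:
  "walk V E xs \<Longrightarrow> walk V E ys \<Longrightarrow> last xs = hd ys \<Longrightarrow> walk V E (xs @ tl ys)"
proof (induction xs rule: induct_list012)
  case 1 then show ?case by simp
next
  case (2 x)
  then have "ys = x # tl ys" using walk_ne[of V E ys] by (cases ys) auto
  then show ?case using 2 by (metis append_Cons append_Nil)
next
  case (3 x y zs)
  have w: "walk V E (y # zs)" and xy: "x \<in> V" "E x y" using 3(3) by (auto simp: walk_Cons2)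
  have "walk V E ((y#zs) @ tl ys)" using 3 w by simp
  then show ?case using xy by (simp add: walk_Cons2)
qed

lemma last_append_tl: "ys \<noteq> [] \<Longrightarrow> last xs = hd ys \<Longrightarrow> xs \<noteq> [] \<Longrightarrow> last (xs @ tl ys) = last ys"
  by (cases ys) auto

lemma hd_append_tl: "xs \<noteq> [] \<Longrightarrow> hd (xs @ ys) = hd xs" by simp

lemma walk_snoc: "walk V E xs \<Longrightarrow> E (last xs) x \<Longrightarrow> x \<in> V \<Longrightarrow> walk V E (xs @ [x])"
proof -
  assume a: "walk V E xs" "E (last xs) x" "x \<in> V"
  have "last xs \<in> V" using a(1) walk_set walk_ne last_in_set by blast
  hence "walk V E [last xs, x]" using a by (simp add: walk_Cons2)
  from walk_append[OF a(1) this] show ?thesis by simp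
qed

lemma graph_sym: "graph V E \<Longrightarrow> E x y \<Longrightarrow> E y x" by (simp add: graph_def)
lemma graph_irrefl: "graph V E \<Longrightarrow> \<not> E x x" by (simp add: graph_def)

lemma walk_rev: "graph V E \<Longrightarrow> walk V E xs \<Longrightarrow> walk V E (rev xs)"
proof (induction xs rule: induct_list012)
  case 1 then show ?case by simp
next
  case (2 x) then show ?case by simp
next
  case (3 x y zs)
  have w: "walk V E (y # zs)" and xy: "x \<in> V" "E x y" using 3(4) by (auto simp: walk_Cons2)
  have "walk V E (rev (y#zs))" using 3 w by simp
  moreover have "last (rev (y#zs)) = y" by simp
  ultimately have "walk V E (rev (y#zs) @ [x])" using walk_snoc graph_sym[OF 3(3) xy(2)] xy(1) by metis
  then show ?case by simp
qed

lemma walk_take: "walk V E xs \<Longrightarrow> 0 < n \<Longrightarrow> walk V E (take n xs)"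
  unfolding walk_def by (auto dest: in_set_takeD)

lemma walk_drop: "walk V E xs \<Longrightarrow> n < length xs \<Longrightarrow> walk V E (drop n xs)"
  unfolding walk_def by (auto dest: in_set_dropD simp: add.commute[of n])

lemma walk_distinct:
  "walk V E xs \<Longrightarrow> \<exists>ys. walk V E ys \<and> distinct ys \<and> hd ys = hd xs \<and> last ys = last xs
      \<and> length ys \<le> length xs \<and> set ys \<subseteq> set xs"
proof (induction "length xs" arbitrary: xs rule: less_induct)
  case less
  show ?case
  proof (cases "distinct xs")
    case True then show ?thesis using less by blast
  next
    case False
    then obtain as y bs cs where xs: "xs = as @ [y] @ bs @ [y] @ cs"
      using not_distinct_decomp by blast
    have w1: "walk V E (as @ [y])"
      using walk_take[OF less(2), of "Suc (length as)"] by (simp add: xs)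
    have w2: "walk V E (y # cs)"
      using walk_drop[OF less(2), of "length as + Suc (length bs)"] by (simp add: xs)
    have w: "walk V E ((as @ [y]) @ tl (y # cs))" using walk_append[OF w1 w2] by simp
    let ?zs = "as @ [y] @ cs"
    have "length ?zs < length xs" by (simp add: xs)
    moreover have "walk V E ?zs" using w by simp
    ultimately obtain ys where ys: "walk V E ys" "distinct ys" "hd ys = hd ?zs" "last ys = last ?zs"
      "length ys \<le> length ?zs" "set ys \<subseteq> set ?zs" using less(1) by blast
    have "hd ?zs = hd xs" by (cases as) (auto simp: xs)
    moreover have "last ?zs = last xs" by (simp add: xs)
    moreover have "set ?zs \<subseteq> set xs" by (auto simp: xs)
    ultimately show ?thesis using ys \<open>length ?zs < length xs\<close> by (metis dual_order.trans less_imp_le order_trans)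
  qed
qed

lemma gdist_le: "walk V E xs \<Longrightarrow> hd xs = u \<Longrightarrow> last xs = v \<Longrightarrow> gdist V E u v \<le> length xs - 1"
  unfolding gdist_def
proof (rule Least_le)
  assume a: "walk V E xs" "hd xs = u" "last xs = v"
  have "length xs = Suc (length xs - 1)" using walk_ne[OF a(1)] by (cases xs) auto
  thus "\<exists>ys. walk V E ys \<and> hd ys = u \<and> last ys = v \<and> length ys = Suc (length xs - 1)" using a by blast
qed

lemma conn_graph: "connected_graph V E \<Longrightarrow> graph V E" by (simp add: connected_graph_def)

lemma gdist_ex: "connected_graph V E \<Longrightarrow> u \<in> V \<Longrightarrow> v \<in> V \<Longrightarrow>
   \<exists>xs. walk V E xs \<and> hd xs = u \<and> last xs = v \<and> length xs = Suc (gdist V E u v)"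
proof -
  assume c: "connected_graph V E" "u \<in> V" "v \<in> V"
  then obtain xs where xs: "walk V E xs" "hd xs = u" "last xs = v" unfolding connected_graph_def by blast
  have "length xs = Suc (length xs - 1)" using walk_ne[OF xs(1)] by (cases xs) auto
  hence "\<exists>n. \<exists>xs. walk V E xs \<and> hd xs = u \<and> last xs = v \<and> length xs = Suc n"
    using xs by blast
  from LeastI_ex[OF this] show ?thesis unfolding gdist_def .
qed

lemma gdist_geo: "connected_graph V E \<Longrightarrow> u \<in> V \<Longrightarrow> v \<in> V \<Longrightarrow>
   \<exists>xs. walk V E xs \<and> distinct xs \<and> hd xs = u \<and> last xs = v \<and> length xs = Suc (gdist V E u v)"
proof -
  assume c: "connected_graph V E" "u \<in> V" "v \<in> V"
  then obtain xs where xs: "walk V E xs" "hd xs = u" "last xs = v" "length xs = Suc (gdist V E u v)"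
    using gdist_ex[OF c] by blast
  then obtain ys where ys: "walk V E ys" "distinct ys" "hd ys = u" "last ys = v" "length ys \<le> length xs"
    using walk_distinct[OF xs(1)] xs(2,3) by auto
  have "gdist V E u v \<le> length ys - 1" using gdist_le[OF ys(1,3,4)] .
  moreover have "length ys \<noteq> 0" using walk_ne[OF ys(1)] by simp
  ultimately have "length ys = Suc (gdist V E u v)" using ys(5) xs(4) by linarith
  thus ?thesis using ys by blast
qed

lemma gdist_refl[simp]: "u \<in> V \<Longrightarrow> gdist V E u u = 0"
  using gdist_le[of V E "[u]" u u] by simp

lemma gdist_sym: "connected_graph V E \<Longrightarrow> u \<in> V \<Longrightarrow> v \<in> V \<Longrightarrow> gdist V E u v = gdist V E v u"
proof -
  have *: "gdist V E b a \<le> gdist V E a b" if hh: "connected_graph V E" "a \<in> V" "b \<in> V" for a b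
  proof -
    obtain xs where xs: "walk V E xs" "hd xs = a" "last xs = b" "length xs = Suc (gdist V E a b)"
      using gdist_ex[OF hh] by blast
    have "walk V E (rev xs)" using walk_rev conn_graph hh xs by blast
    moreover have "hd (rev xs) = b" "last (rev xs) = a" using xs walk_ne
      by (auto simp: hd_rev last_rev)
    ultimately have "gdist V E b a \<le> length (rev xs) - 1" by (rule gdist_le)
    thus ?thesis using xs(4) by simp
  qed
  assume "connected_graph V E" "u \<in> V" "v \<in> V"
  thus ?thesis using *[of u v] *[of v u] by simp
qed

lemma gdist_tri: "connected_graph V E \<Longrightarrow> u \<in> V \<Longrightarrow> v \<in> V \<Longrightarrow> w \<in> V \<Longrightarrow>
  gdist V E u w \<le> gdist V E u v + gdist V E v w"
proof -
  assume c: "connected_graph V E" "u \<in> V" "v \<in> V" "w \<in> V"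
  obtain xs where xs: "walk V E xs" "hd xs = u" "last xs = v" "length xs = Suc (gdist V E u v)"
    using gdist_ex[OF c(1,2,3)] by blast
  obtain ys where ys: "walk V E ys" "hd ys = v" "last ys = w" "length ys = Suc (gdist V E v w)"
    using gdist_ex[OF c(1,3,4)] by blast
  have "walk V E (xs @ tl ys)" using walk_append[OF xs(1) ys(1)] xs(3) ys(2) by simp
  moreover have "hd (xs @ tl ys) = u" using xs walk_ne[OF xs(1)] by auto
  moreover have "last (xs @ tl ys) = w" using last_append_tl[of ys xs] xs ys walk_ne[OF xs(1)] walk_ne[OF ys(1)] by simp
  ultimately have "gdist V E u w \<le> length (xs @ tl ys) - 1" by (rule gdist_le)
  thus ?thesis using xs ys by simp
qed

lemma gdist_0: "connected_graph V E \<Longrightarrow> u \<in> V \<Longrightarrow> v \<in> V \<Longrightarrow> gdist V E u v = 0 \<Longrightarrow> u = v"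
proof -
  assume c: "connected_graph V E" "u \<in> V" "v \<in> V" "gdist V E u v = 0"
  from gdist_ex[OF c(1-3)] obtain xs where xs: "walk V E xs" "hd xs = u" "last xs = v"
     "length xs = Suc (gdist V E u v)" by blast
  hence "length xs = Suc 0" using c(4) by simp
  then obtain x where "xs = [x]" by (cases xs) auto
  thus ?thesis using xs by simp
qed

lemma gdist_edge: "u \<in> V \<Longrightarrow> v \<in> V \<Longrightarrow> E u v \<Longrightarrow> gdist V E u v \<le> 1"
proof -
  assume a: "u \<in> V" "v \<in> V" "E u v"
  have "walk V E [u,v]" using a by (simp add: walk_Cons2)
  from gdist_le[OF this] show ?thesis by simp
qed

lemma gdist_le1: "connected_graph V E \<Longrightarrow> u \<in> V \<Longrightarrow> v \<in> V \<Longrightarrow> gdist V E u v \<le> 1 \<Longrightarrow> u = v \<or> E u v"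
proof -
  assume c: "connected_graph V E" "u \<in> V" "v \<in> V" "gdist V E u v \<le> 1"
  show ?thesis
  proof (cases "gdist V E u v = 0")
    case True thus ?thesis using gdist_0[OF c(1-3) True] by simp
  next
    case False
    hence "gdist V E u v = 1" using c by simp
    from gdist_ex[OF c(1-3)] obtain xs where xs: "walk V E xs" "hd xs = u" "last xs = v"
     "length xs = Suc (gdist V E u v)" by blast
    hence len: "length xs = Suc (Suc 0)" using \<open>gdist V E u v = 1\<close> by simp
    obtain a rest where r: "xs = a # rest" using len by (cases xs) auto
    then obtain b where "rest = [b]" using len by (cases rest) auto
    hence "xs = [a,b]" using r by simp
    thus ?thesis using xs by (simp add: walk_Cons2)
  qed
qed

lemma tl_sub: "set (tl zs) \<subseteq> set zs" by (cases zs) auto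

lemma distinct_hd_last: "distinct ys \<Longrightarrow> 2 \<le> length ys \<Longrightarrow> hd ys \<noteq> last ys"
  by (cases ys) auto

lemma cycle_lemma:
  assumes g: "graph V E" and x: "x \<in> V" "E x a" "E x b" "a \<noteq> b"
    and W: "walk V E W" "hd W = a" "last W = b" "x \<notin> set W"
  shows "has_cycle V E"
proof -
  have "set W \<subseteq> V - {x}" using walk_set[OF W(1)] W(4) by blast
  hence "walk (V - {x}) E W" using walk_restrict[OF W(1)] by blast
  hence "\<exists>ys. walk (V - {x}) E ys \<and> distinct ys \<and> hd ys = hd W \<and> last ys = last W
      \<and> length ys \<le> length W \<and> set ys \<subseteq> set W" by (rule walk_distinct)
  then obtain S where S0: "walk (V - {x}) E S" "distinct S" "hd S = hd W" "last S = last W" by blast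
  hence S: "walk (V - {x}) E S" "distinct S" "hd S = a" "last S = b" using W(2,3) by auto
  have "S \<noteq> []" using walk_ne[OF S(1)] .
  have len: "2 \<le> length S"
  proof (rule ccontr)
    assume "\<not> 2 \<le> length S"
    hence "length S = Suc 0" using \<open>S \<noteq> []\<close> by (cases S) (auto simp: not_le)
    then obtain s where "S = [s]" by (cases S) auto
    thus False using S x by simp
  qed
  obtain S' where S': "S = a # S'" using S \<open>S \<noteq> []\<close> by (cases S) auto
  have wS: "walk V E S" using walk_mono[OF S(1)] by blast
  have xS: "x \<notin> set S" using walk_set[OF S(1)] by blast
  have "walk V E (x # S)" using S' wS x by (cases S') (auto simp: walk_Cons2)
  moreover have "distinct (x # S)" using S xS by simp
  moreover have "3 \<le> length (x # S)" using len by simp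
  moreover have "E (last (x # S)) (hd (x # S))" using S x(3) graph_sym[OF g, of x b] \<open>S \<noteq> []\<close> by simp
  ultimately show ?thesis unfolding has_cycle_def by (intro exI[of _ "x # S"] conjI)
qed

lemma tree_unique:
  assumes t: "tree V E"
  shows "walk V E xs \<Longrightarrow> walk V E ys \<Longrightarrow> distinct xs \<Longrightarrow> distinct ys \<Longrightarrow> hd xs = hd ys \<Longrightarrow>
    last xs = last ys \<Longrightarrow> xs = ys"
proof (induction xs arbitrary: ys)
  case Nil thus ?case by simp
next
  case (Cons x xs')
  note IH = Cons.IH
  note wxs = Cons.prems(1) and wys = Cons.prems(2) and dxs = Cons.prems(3) and dys = Cons.prems(4)
    and hh = Cons.prems(5) and ll = Cons.prems(6)
  have g: "graph V E" using t by (simp add: tree_def connected_graph_def)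
  have nc: "\<not> has_cycle V E" using t by (simp add: tree_def)
  have "ys \<noteq> []" using walk_ne[OF wys] .
  then obtain ys' where ys: "ys = x # ys'" using hh by (cases ys) auto
  show ?case
  proof (cases "xs' = []")
    case True
    show ?thesis
    proof (rule ccontr)
      assume "x # xs' \<noteq> ys"
      hence "ys' \<noteq> []" using True ys by simp
      hence "2 \<le> length ys" using ys by (cases ys') auto
      hence "hd ys \<noteq> last ys" using distinct_hd_last[OF dys] by blast
      thus False using hh ll True by simp
    qed
  next
    case False
    have ys'ne: "ys' \<noteq> []"
    proof
      assume "ys' = []"
      hence "last xs' = x" using ll ys False by simp
      moreover have "last xs' \<in> set xs'" using last_in_set[OF False] .
      ultimately show False using dxs by simp
    qed
    obtain a xs'' where xa: "xs' = a # xs''" using False by (cases xs') auto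
    obtain b ys'' where yb: "ys' = b # ys''" using ys'ne by (cases ys') auto
    have wx: "walk V E xs'" and Exa: "E x a" "x \<in> V" using wxs xa by (auto simp: walk_Cons2)
    have wy: "walk V E ys'" and Exb: "E x b" using wys ys yb by (auto simp: walk_Cons2)
    have lst: "last xs' = last ys'" using ll ys False ys'ne by simp
    show ?thesis
    proof (cases "a = b")
      case True
      have "distinct xs'" "distinct ys'" using dxs dys ys by auto
      moreover have "hd xs' = hd ys'" using xa yb True by simp
      ultimately have "xs' = ys'" using IH[OF wx wy] lst by blast
      thus ?thesis using ys by simp
    next
      case False
      have wr: "walk V E (rev ys')" using walk_rev[OF g wy] .
      have lh: "last xs' = hd (rev ys')" using lst ys'ne by (simp add: hd_rev)
      hence wW: "walk V E (xs' @ tl (rev ys'))" using walk_append[OF wx wr] by simp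
      have h1: "hd (xs' @ tl (rev ys')) = a" using xa by simp
      have "rev ys' \<noteq> []" using ys'ne by simp
      hence "last (xs' @ tl (rev ys')) = last (rev ys')" using last_append_tl[of "rev ys'" xs'] lh xa by simp
      hence h2: "last (xs' @ tl (rev ys')) = b" using yb by (simp add: last_rev)
      have "x \<notin> set xs'" using dxs by simp
      moreover have "x \<notin> set ys'" using dys ys by simp
      ultimately have h3: "x \<notin> set (xs' @ tl (rev ys'))" using tl_sub[of "rev ys'"] by auto
      have "has_cycle V E" using cycle_lemma[OF g Exa(2) Exa(1) Exb False wW h1 h2 h3] .
      thus ?thesis using nc by blast
    qed
  qed
qed

lemma tree_dist:
  assumes t: "tree V E" and w: "walk V E xs" "distinct xs"
  shows "gdist V E (hd xs) (last xs) = length xs - 1"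
proof -
  have c: "connected_graph V E" using t by (simp add: tree_def)
  have ne: "xs \<noteq> []" using walk_ne[OF w(1)] .
  have "hd xs \<in> V" "last xs \<in> V" using walk_set[OF w(1)] hd_in_set[OF ne] last_in_set[OF ne] by auto
  then obtain g where g: "walk V E g" "distinct g" "hd g = hd xs" "last g = last xs"
      "length g = Suc (gdist V E (hd xs) (last xs))" using gdist_geo[OF c] by blast
  have "g = xs" using tree_unique[OF t g(1) w(1) g(2) w(2) g(3) g(4)] .
  thus ?thesis using g by simp
qed
lemma graph_finite: "connected_graph V E \<Longrightarrow> finite V"
  by (simp add: connected_graph_def graph_def)

lemma ecc_ge: "connected_graph V E \<Longrightarrow> y \<in> V \<Longrightarrow> gdist V E x y \<le> ecc V E x"
  unfolding ecc_def using graph_finite by (intro Max_ge) auto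

lemma diam_ge: "connected_graph V E \<Longrightarrow> x \<in> V \<Longrightarrow> y \<in> V \<Longrightarrow> gdist V E x y \<le> diam V E"
proof -
  assume a: "connected_graph V E" "x \<in> V" "y \<in> V"
  have "ecc V E x \<le> diam V E" unfolding diam_def using graph_finite[OF a(1)] a(2) by (intro Max_ge) auto
  thus ?thesis using ecc_ge[OF a(1) a(3), of x] by simp
qed

lemma not_diametrical_of:
  assumes c: "connected_graph V E" and h: "minimal_dominating V E h" and lt: "diam V E < bcost V h"
  shows "\<not> diametrical V E"
proof -
  let ?S = "{bcost V f | f. minimal_dominating V E f}"
  have "?S \<subseteq> {..(\<Sum>v\<in>V. ecc V E v)}"
  proof
    fix s assume "s \<in> ?S"
    then obtain f where f: "s = bcost V f" "minimal_dominating V E f" by blast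
    hence "\<forall>v\<in>V. f v \<le> ecc V E v"
      unfolding minimal_dominating_def dominating_def broadcast_def by blast
    hence "bcost V f \<le> (\<Sum>v\<in>V. ecc V E v)" unfolding bcost_def using sum_mono[of V f "ecc V E"] by blast
    thus "s \<in> {..(\<Sum>v\<in>V. ecc V E v)}" using f by simp
  qed
  hence fin: "finite ?S" using finite_subset by blast
  have "bcost V h \<in> ?S" using h by blast
  hence "bcost V h \<le> upper_broadcast_number V E" unfolding upper_broadcast_number_def
    using fin by (rule Max_ge[rotated])
  thus ?thesis using lt unfolding diametrical_def by simp
qed

lemma framework:
  fixes ow pr :: "nat \<Rightarrow> 'a"
  assumes c: "connected_graph V E"
  and m2: "2 \<le> m"
  and oV: "\<forall>k<m. ow k \<in> V" and pV: "\<forall>k<m. pr k \<in> V"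
  and inj: "inj_on ow {..<m}"
  and A: "\<forall>k<m. \<forall>j<m. j \<noteq> k \<longrightarrow> max 1 (gdist V E (ow k) (pr k)) < gdist V E (ow k) (pr j)"
  and B: "\<forall>y\<in>V. (\<exists>j<m. gdist V E y (pr j) \<le> 1) \<longrightarrow>
            (\<exists>k<m. \<forall>j<m. j \<noteq> k \<longrightarrow> gdist V E (ow k) y < gdist V E (ow k) (pr j))"
  shows "\<exists>h. minimal_dominating V E h \<and> (\<Sum>k<m. max 1 (gdist V E (ow k) (pr k))) \<le> bcost V h"
proof -
  let ?d = "gdist V E"
  define S where "S x = {j. j < m \<and> ow j \<noteq> x}" for x
  define G where "G x = (if x \<in> V then Min ((\<lambda>j. ?d x (pr j)) ` S x) - 1 else 0)" for x
  have finV: "finite V" using graph_finite[OF c] .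
  have finS: "finite (S x)" for x unfolding S_def by simp
  have neS: "S x \<noteq> {}" for x
  proof -
    have mm: "0 < m" "1 < m" using m2 by auto
    have o01: "ow 0 \<noteq> ow 1" using inj_onD[OF inj, of 0 1] m2 by auto
    show ?thesis
    proof (cases "ow 0 = x")
      case True
      hence "1 \<in> S x" unfolding S_def using mm o01 by auto
      thus ?thesis by blast
    next
      case False
      hence "0 \<in> S x" unfolding S_def using mm o01 by auto
      thus ?thesis by blast
    qed
  qed
  have G1: "G x \<le> ?d x (pr j) - 1" if "x \<in> V" "j \<in> S x" for x j
  proof -
    have "Min ((\<lambda>j. ?d x (pr j)) ` S x) \<le> ?d x (pr j)" using finS that by (intro Min_le) auto
    thus ?thesis using that unfolding G_def by simp
  qed
  have Gge: "n \<le> G x" if "x \<in> V" "\<forall>j\<in>S x. n < ?d x (pr j)" for x n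
  proof -
    have "n < Min ((\<lambda>j. ?d x (pr j)) ` S x)" using finS neS that by (subst Min_gr_iff) auto
    thus ?thesis using that unfolding G_def by simp
  qed
  have SV: "j \<in> S x \<Longrightarrow> j < m" for j x unfolding S_def by simp
  have Secc: "G x \<le> ecc V E x" if "x \<in> V" for x
  proof -
    obtain j where j: "j \<in> S x" using neS by blast
    have "G x \<le> ?d x (pr j)" using G1[OF that j] by simp
    also have "\<dots> \<le> ecc V E x" using ecc_ge[OF c] pV SV[OF j] by blast
    finally show ?thesis .
  qed
  have Sown: "S (ow k) = {j. j < m \<and> j \<noteq> k}" if "k < m" for k
    using inj that unfolding S_def inj_on_def by auto
  have Gown: "max 1 (?d (ow k) (pr k)) \<le> G (ow k)" if "k < m" for k
    using Gge[of "ow k"] oV A that Sown[OF that] by auto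
  have bG: "broadcast V E G" unfolding broadcast_def using Secc unfolding G_def by auto
  have dG: "dominating V E G" unfolding dominating_def
  proof (intro conjI bG ballI)
    fix y assume y: "y \<in> V"
    show "\<exists>v\<in>V. 1 \<le> G v \<and> ?d y v \<le> G v"
    proof (cases "\<exists>j<m. ?d y (pr j) \<le> 1")
      case True
      then obtain k where k: "k < m" "\<forall>j<m. j \<noteq> k \<longrightarrow> ?d (ow k) y < ?d (ow k) (pr j)"
        using B y by blast
      have "?d (ow k) y \<le> G (ow k)" using Gge[of "ow k"] oV k Sown[OF k(1)] by auto
      moreover have "1 \<le> G (ow k)" using Gown[OF k(1)] by simp
      moreover have "?d y (ow k) = ?d (ow k) y" using gdist_sym[OF c] y oV k by blast
      ultimately show ?thesis using oV k by auto
    next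
      case False
      hence "\<forall>j\<in>S y. 1 < ?d y (pr j)" using SV by force
      hence "1 \<le> G y" using Gge y by blast
      thus ?thesis using y by auto
    qed
  qed
  let ?P = "\<lambda>h. dominating V E h \<and> (\<forall>x. h x \<le> G x)"
  have "?P G" using dG by simp
  then obtain h where hP: "?P h" and hmin: "\<And>h'. ?P h' \<Longrightarrow> bcost V h \<le> bcost V h'"
    using ex_has_least_nat[of ?P G "bcost V"] by blast
  have hmd: "minimal_dominating V E h" unfolding minimal_dominating_def
  proof (intro conjI ballI allI impI)
    show "dominating V E h" using hP by simp
    fix v k assume v: "v \<in> V" and k: "k < h v"
    show "\<not> dominating V E (h(v := k))"
    proof
      assume dk: "dominating V E (h(v := k))"
      have "h v \<le> G v" using hP by blast
      hence kv: "k \<le> G v" using k by linarith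
      have "\<forall>x. (h(v := k)) x \<le> G x" using hP kv by auto
      hence "bcost V h \<le> bcost V (h(v := k))" using hmin dk by blast
      moreover have "bcost V (h(v := k)) < bcost V h" unfolding bcost_def
        using finV v k by (intro sum_strict_mono_ex1) auto
      ultimately show False by simp
    qed
  qed
  have low: "max 1 (?d (ow k) (pr k)) \<le> h (ow k)" if k: "k < m" for k
  proof -
    have pk: "pr k \<in> V" using pV k by blast
    obtain x where x: "x \<in> V" "1 \<le> h x" "?d (pr k) x \<le> h x"
      using hP pk unfolding dominating_def by blast
    have hG: "h x \<le> G x" using hP by blast
    have dx: "?d x (pr k) \<le> G x" using x hG gdist_sym[OF c x(1) pk] by simp
    have "x = ow k"
    proof (rule ccontr)
      assume "x \<noteq> ow k"
      hence "k \<in> S x" unfolding S_def using k by auto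
      hence "G x \<le> ?d x (pr k) - 1" using G1 x by blast
      moreover have "1 \<le> G x" using x hG by simp
      ultimately show False using dx by simp
    qed
    thus ?thesis using x gdist_sym[OF c x(1) pk] by simp
  qed
  have "(\<Sum>k<m. max 1 (?d (ow k) (pr k))) \<le> (\<Sum>k<m. h (ow k))"
    using low by (intro sum_mono) simp
  also have "\<dots> = (\<Sum>v\<in>ow ` {..<m}. h v)" using sum.reindex[OF inj, of h] by simp
  also have "\<dots> \<le> bcost V h" unfolding bcost_def
    using finV oV by (intro sum_mono2) auto
  finally show ?thesis using hmd by blast
qed




lemma close_cases: "connected_graph V E \<Longrightarrow> y \<in> V \<Longrightarrow> p \<in> V \<Longrightarrow> gdist V E y p \<le> 1 \<Longrightarrow> y = p \<or> E p y"
  using gdist_le1[of V E y p] graph_sym[OF conn_graph, of V E y p] by blast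

locale dconf =
  fixes V :: "'a set" and E :: "'a \<Rightarrow> 'a \<Rightarrow> bool" and ps :: "'a list" and u :: 'a and i :: nat
  assumes tr: "tree V E" and dp: "diametral_path V E ps" and pu: "protrudes V E ps u i"
    and l3: "gdist V E u (ps ! i) > 2"
begin

abbreviation "d \<equiv> gdist V E"
abbreviation "D \<equiv> diam V E"
abbreviation v where "v j \<equiv> ps ! j"
definition "lm = d u (v i)"

lemma c: "connected_graph V E" using tr by (simp add: tree_def)
lemma g: "graph V E" using conn_graph[OF c] .
lemma psw: "walk V E ps" and psd: "distinct ps" and psl: "length ps = Suc D"
  and psD: "d (hd ps) (last ps) = D"
  using dp by (auto simp: diametral_path_def)

lemma vV: "j \<le> D \<Longrightarrow> v j \<in> V"
  using walk_set[OF psw] psl by (metis le_imp_less_Suc nth_mem subsetD)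

lemma dsym: "x \<in> V \<Longrightarrow> y \<in> V \<Longrightarrow> d x y = d y x" using gdist_sym[OF c] by blast
lemma dtri: "x \<in> V \<Longrightarrow> y \<in> V \<Longrightarrow> z \<in> V \<Longrightarrow> d x z \<le> d x y + d y z" using gdist_tri[OF c] by blast

lemma tdist: "walk V E xs \<Longrightarrow> distinct xs \<Longrightarrow> d (hd xs) (last xs) = length xs - 1"
  using tree_dist[OF tr] by blast

lemma seg:
  assumes "j \<le> k" "k \<le> D"
  shows "walk V E (drop j (take (Suc k) ps)) \<and> distinct (drop j (take (Suc k) ps))
    \<and> hd (drop j (take (Suc k) ps)) = v j \<and> last (drop j (take (Suc k) ps)) = v k
    \<and> length (drop j (take (Suc k) ps)) = Suc (k - j) \<and> set (drop j (take (Suc k) ps)) \<subseteq> set ps"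
proof -
  let ?s = "drop j (take (Suc k) ps)"
  have lt: "length (take (Suc k) ps) = Suc k" using assms psl by simp
  have w1: "walk V E (take (Suc k) ps)" using walk_take[OF psw] by simp
  have w: "walk V E ?s" using walk_drop[OF w1] lt assms by simp
  have l: "length ?s = Suc (k - j)" using lt assms by simp
  have h: "hd ?s = v j" using assms lt by (simp add: hd_drop_conv_nth)
  have "last ?s = ?s ! (length ?s - 1)" using l by (simp add: last_conv_nth)
  also have "\<dots> = v k" using l assms lt by simp
  finally have la: "last ?s = v k" .
  have "distinct ?s" using psd by (simp add: distinct_drop distinct_take)
  moreover have "set ?s \<subseteq> set ps" by (meson in_set_dropD in_set_takeD subsetI)
  ultimately show ?thesis using w l h la by simp
qed

lemma dvv: "j \<le> k \<Longrightarrow> k \<le> D \<Longrightarrow> d (v j) (v k) = k - j"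
  using seg[of j k] tdist by (metis diff_Suc_1)

lemma dvv': "j \<le> D \<Longrightarrow> k \<le> D \<Longrightarrow> d (v j) (v k) = (if j \<le> k then k - j else j - k)"
  using dvv[of j k] dvv[of k j] dsym[OF vV vV, of j k] by auto

lemma vinj: "j \<le> D \<Longrightarrow> k \<le> D \<Longrightarrow> v j = v k \<longleftrightarrow> j = k"
  using psd psl nth_eq_iff_index_eq[of ps j k] by simp

lemma inps: "x \<in> set ps \<Longrightarrow> \<exists>j\<le>D. x = v j"
  using psl by (auto simp: in_set_conv_nth less_Suc_eq_le)

lemma off_path:
  assumes t: "t \<le> D" and j: "j \<le> D" and q: "walk V E q" "distinct q" "hd q = v t"
    and qs: "set q \<inter> set ps \<subseteq> {v t}"
  shows "d (v j) (last q) = (if j \<le> t then t - j else j - t) + (length q - 1)"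
proof -
  obtain s where s: "walk V E s" "distinct s" "hd s = v j" "last s = v t"
    "length s = Suc (if j \<le> t then t - j else j - t)" "set s \<subseteq> set ps"
  proof (cases "j \<le> t")
    case True thus ?thesis using seg[OF True t] that by auto
  next
    case False
    let ?s = "drop t (take (Suc j) ps)"
    have ss: "walk V E ?s" "distinct ?s" "hd ?s = v t" "last ?s = v j" "length ?s = Suc (j - t)"
      "set ?s \<subseteq> set ps" using seg[of t j] False j by auto
    have "?s \<noteq> []" using ss(5) by auto
    hence "walk V E (rev ?s)" "distinct (rev ?s)" "hd (rev ?s) = v j" "last (rev ?s) = v t"
      "length (rev ?s) = Suc (j - t)" "set (rev ?s) \<subseteq> set ps"
      using ss walk_rev[OF g] by (auto simp: hd_rev last_rev)
    thus ?thesis using that False by auto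
  qed
  have qne: "q \<noteq> []" using walk_ne[OF q(1)] .
  have sne: "s \<noteq> []" using walk_ne[OF s(1)] .
  have wL: "walk V E (s @ tl q)" using walk_append[OF s(1) q(1)] s(4) q(3) by simp
  have "set (tl q) \<inter> set s = {}"
  proof (rule ccontr)
    assume "set (tl q) \<inter> set s \<noteq> {}"
    then obtain x where x: "x \<in> set (tl q)" "x \<in> set s" by blast
    have hq: "hd q \<notin> set (tl q)" using q(2) qne by (cases q) auto
    have "x \<in> set q" using x(1) tl_sub[of q] by blast
    moreover have "x \<in> set ps" using x(2) s(6) by blast
    ultimately have "x \<in> {v t}" using qs by blast
    hence "x = hd q" using q(3) by simp
    thus False using hq x(1) by simp
  qed
  hence dL: "distinct (s @ tl q)" using s(2) q(2) by (simp add: distinct_tl Int_commute)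
  have "hd (s @ tl q) = v j" using sne s(3) by simp
  moreover have "last (s @ tl q) = last q" using last_append_tl[OF qne] s(4) q(3) sne by simp
  ultimately have "d (v j) (last q) = length (s @ tl q) - 1" using tdist[OF wL dL] by simp
  thus ?thesis using s(5) qne by (cases q) auto
qed

lemma iD: "i \<le> D" and uV: "u \<in> V" and unps: "u \<notin> set ps"
  and prot: "\<And>j. j \<le> D \<Longrightarrow> j \<noteq> i \<Longrightarrow> d u (v i) < d u (v j)"
  using pu psl by (auto simp: protrudes_def)

lemma l3': "3 \<le> lm" using l3 unfolding lm_def by simp

definition w where "w = (SOME w. walk V E w \<and> distinct w \<and> hd w = v i \<and> last w = u \<and> length w = Suc lm)"

lemma w_props: "walk V E w \<and> distinct w \<and> hd w = v i \<and> last w = u \<and> length w = Suc lm"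
proof -
  have "d (v i) u = lm" unfolding lm_def using dsym[OF vV[OF iD] uV] by simp
  hence "\<exists>w. walk V E w \<and> distinct w \<and> hd w = v i \<and> last w = u \<and> length w = Suc lm"
    using gdist_geo[OF c vV[OF iD] uV] by simp
  thus ?thesis unfolding w_def by (rule someI_ex)
qed

lemma ww: "walk V E w" and wd: "distinct w" and wh: "hd w = v i" and wl: "last w = u"
  and wlen: "length w = Suc lm" using w_props by auto

abbreviation y where "y s \<equiv> w ! s"

lemma y0: "y 0 = v i" using wh wlen by (simp add: hd_conv_nth[symmetric] walk_ne[OF ww])
lemma yl: "y lm = u" using wl wlen walk_ne[OF ww] by (simp add: last_conv_nth)
lemma yV: "s \<le> lm \<Longrightarrow> y s \<in> V" using walk_set[OF ww] wlen by (metis le_imp_less_Suc nth_mem subsetD)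
lemma yinj: "s \<le> lm \<Longrightarrow> s' \<le> lm \<Longrightarrow> y s = y s' \<longleftrightarrow> s = s'"
  using wd wlen nth_eq_iff_index_eq[of w s s'] by simp
lemma yE: "s < lm \<Longrightarrow> E (y s) (y (Suc s))" using ww wlen unfolding walk_def by auto

lemma dyy: assumes "s \<le> s'" "s' \<le> lm" shows "d (y s) (y s') = s' - s"
proof -
  let ?q = "drop s (take (Suc s') w)"
  have lt: "length (take (Suc s') w) = Suc s'" using assms wlen by simp
  have w1: "walk V E (take (Suc s') w)" using walk_take[OF ww] by simp
  have wq: "walk V E ?q" using walk_drop[OF w1] lt assms by simp
  have l: "length ?q = Suc (s' - s)" using lt assms by simp
  have h: "hd ?q = y s" using assms lt by (simp add: hd_drop_conv_nth)
  have "last ?q = ?q ! (length ?q - 1)" using l by (simp add: last_conv_nth)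
  also have "\<dots> = y s'" using l assms lt by simp
  finally have la: "last ?q = y s'" .
  have "distinct ?q" using wd by (simp add: distinct_drop distinct_take)
  thus ?thesis using tdist[OF wq] h la l by simp
qed

lemma ynps: assumes "1 \<le> s" "s \<le> lm" shows "y s \<notin> set ps"
proof
  assume "y s \<in> set ps"
  then obtain j where j: "j \<le> D" "y s = v j" using inps by blast
  show False
  proof (cases "j = i")
    case True
    hence "y s = y 0" using j y0 by simp
    thus False using yinj[of s 0] assms by simp
  next
    case False
    have "d u (v j) = d (y s) (y lm)" using j yl dsym[OF uV vV[OF j(1)]] by simp
    also have "\<dots> = lm - s" using dyy assms by simp
    finally have "d u (v j) < lm" using assms l3' by simp
    thus False using prot[OF j(1) False] unfolding lm_def by simp
  qed
qed

lemma dvy: assumes "j \<le> D" "s \<le> lm" shows "d (v j) (y s) = (if j \<le> i then i - j else j - i) + s"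
proof -
  let ?q = "take (Suc s) w"
  have wq: "walk V E ?q" using walk_take[OF ww] by simp
  have dq: "distinct ?q" using wd by simp
  have hq: "hd ?q = v i" using wh walk_ne[OF ww] by (cases w) auto
  have lq: "length ?q = Suc s" using assms wlen by simp
  have "?q \<noteq> []" using lq by auto
  hence "last ?q = ?q ! s" using lq by (simp add: last_conv_nth)
  hence laq: "last ?q = y s" by simp
  have "set ?q \<inter> set ps \<subseteq> {v i}"
  proof
    fix x assume x: "x \<in> set ?q \<inter> set ps"
    then obtain t where t: "t < Suc s" "x = ?q ! t" using lq by (auto simp: in_set_conv_nth)
    hence "x = y t" by simp
    moreover have "t = 0"
    proof (rule ccontr)
      assume "t \<noteq> 0"
      hence "1 \<le> t" "t \<le> lm" using t assms by auto
      hence "y t \<notin> set ps" by (rule ynps)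
      thus False using x \<open>x = y t\<close> by simp
    qed
    ultimately show "x \<in> {v i}" using y0 by simp
  qed
  from off_path[OF iD assms(1) wq dq hq this] show ?thesis using laq lq by simp
qed

end



lemma less4: "(\<forall>k<(4::nat). P k) \<longleftrightarrow> P 0 \<and> P 1 \<and> P 2 \<and> P 3"
  by (auto simp: numeral_eq_Suc less_Suc_eq)
lemma less3: "(\<forall>k<(3::nat). P k) \<longleftrightarrow> P 0 \<and> P 1 \<and> P 2"
  by (auto simp: numeral_eq_Suc less_Suc_eq)
lemma ex3: "(\<exists>k<(3::nat). P k) \<longleftrightarrow> P 0 \<or> P 1 \<or> P 2"
  by (auto simp: numeral_eq_Suc less_Suc_eq)
lemma ex4: "(\<exists>k<(4::nat). P k) \<longleftrightarrow> P 0 \<or> P 1 \<or> P 2 \<or> P 3"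
  by (auto simp: numeral_eq_Suc less_Suc_eq)
lemma less5: "(\<forall>k<(5::nat). P k) \<longleftrightarrow> P 0 \<and> P 1 \<and> P 2 \<and> P 3 \<and> P 4"
  by (auto simp: numeral_eq_Suc less_Suc_eq)

lemma conclude:
  fixes ow pr :: "nat \<Rightarrow> 'a"
  assumes c: "connected_graph V E" and m2: "2 \<le> m"
  and oV: "\<forall>k<m. ow k \<in> V" and pV: "\<forall>k<m. pr k \<in> V" and inj: "inj_on ow {..<m}"
  and A: "\<forall>k<m. \<forall>j<m. j \<noteq> k \<longrightarrow> max 1 (gdist V E (ow k) (pr k)) < gdist V E (ow k) (pr j)"
  and B: "\<forall>y\<in>V. (\<exists>j<m. gdist V E y (pr j) \<le> 1) \<longrightarrow>
            (\<exists>k<m. \<forall>j<m. j \<noteq> k \<longrightarrow> gdist V E (ow k) y < gdist V E (ow k) (pr j))"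
  and S: "diam V E < (\<Sum>k<m. max 1 (gdist V E (ow k) (pr k)))"
  shows "\<not> diametrical V E"
proof -
  obtain h where "minimal_dominating V E h" "(\<Sum>k<m. max 1 (gdist V E (ow k) (pr k))) \<le> bcost V h"
    using framework[OF c m2 oV pV inj A B] by blast
  thus ?thesis using not_diametrical_of[OF c] S by (meson less_le_trans)
qed

lemma conclude_strong:
  fixes ow pr :: "nat \<Rightarrow> 'a"
  assumes c: "connected_graph V E" and m2: "2 \<le> m"
  and oV: "\<forall>k<m. ow k \<in> V" and pV: "\<forall>k<m. pr k \<in> V" and inj: "inj_on ow {..<m}"
  and A: "\<forall>k<m. \<forall>j<m. j \<noteq> k \<longrightarrow> gdist V E (ow k) (pr k) + 2 \<le> gdist V E (ow k) (pr j)"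
  and S: "diam V E < (\<Sum>k<m. max 1 (gdist V E (ow k) (pr k)))"
  shows "\<not> diametrical V E"
proof (rule conclude[OF c m2 oV pV inj _ _ S])
  show "\<forall>k<m. \<forall>j<m. j \<noteq> k \<longrightarrow> max 1 (gdist V E (ow k) (pr k)) < gdist V E (ow k) (pr j)"
    using A by fastforce
  show "\<forall>y\<in>V. (\<exists>j<m. gdist V E y (pr j) \<le> 1) \<longrightarrow>
            (\<exists>k<m. \<forall>j<m. j \<noteq> k \<longrightarrow> gdist V E (ow k) y < gdist V E (ow k) (pr j))"
  proof (intro ballI impI)
    fix y assume y: "y \<in> V" and "\<exists>j<m. gdist V E y (pr j) \<le> 1"
    then obtain j where j: "j < m" "gdist V E y (pr j) \<le> 1" by blast
    have "gdist V E (ow j) y \<le> gdist V E (ow j) (pr j) + gdist V E (pr j) y"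
      using gdist_tri[OF c] oV pV j y by blast
    moreover have "gdist V E (pr j) y = gdist V E y (pr j)" using gdist_sym[OF c] pV j y by blast
    ultimately have "gdist V E (ow j) y \<le> gdist V E (ow j) (pr j) + 1" using j by simp
    hence "\<forall>i<m. i \<noteq> j \<longrightarrow> gdist V E (ow j) y < gdist V E (ow j) (pr i)" using A j by fastforce
    thus "\<exists>k<m. \<forall>i<m. i \<noteq> k \<longrightarrow> gdist V E (ow k) y < gdist V E (ow k) (pr i)" using j by blast
  qed
qed

lemma inj_list: "distinct xs \<Longrightarrow> inj_on ((!) xs) {..<length xs}"
  by (simp add: inj_on_nth)

context dconf
begin

lemma i3: "3 \<le> i" and iD3: "i + 3 \<le> D"
proof -
  have y3V: "y 3 \<in> V" using yV l3' by simp
  have "d (v 0) (y 3) = i + 3" using dvy[of 0 3] l3' by simp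
  moreover have "d (v 0) (y 3) \<le> D" using diam_ge[OF c vV y3V] by simp
  ultimately show "i + 3 \<le> D" by simp
  have "d (v D) (y 3) = D - i + 3" using dvy[of D 3] l3' iD by simp
  moreover have "d (v D) (y 3) \<le> D" using diam_ge[OF c vV y3V] by simp
  ultimately show "3 \<le> i" using iD by simp
qed

lemma yps: "1 \<le> s \<Longrightarrow> s \<le> lm \<Longrightarrow> y s \<notin> set ps" by (rule ynps)

lemma vps: "j \<le> D \<Longrightarrow> v j \<in> set ps" using psl by simp

lemma edge_ne: "E a b \<Longrightarrow> a \<noteq> b" using graph_irrefl[OF g] by blast

lemma nbr_ps: assumes t: "t \<le> D" and yy: "yy \<in> set ps" and e: "E (v t) yy"
  shows "(1 \<le> t \<and> yy = v (t - 1)) \<or> (t + 1 \<le> D \<and> yy = v (t + 1))"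
proof -
  obtain s where s: "s \<le> D" "yy = v s" using inps[OF yy] by blast
  have "d (v t) (v s) \<le> 1" using gdist_edge[where V=V and E=E, OF vV[OF t] vV[OF s(1)]] e s by simp
  moreover have "t \<noteq> s" using edge_ne[OF e] s by auto
  ultimately have "s = t + 1 \<or> (1 \<le> t \<and> s = t - 1)" using dvv'[OF t s(1)] by (auto split: if_splits)
  thus ?thesis using s by auto
qed

lemma side_vi:
  assumes cV: "cc \<in> V" and e: "E (v i) cc" and np: "cc \<notin> set ps" and n1: "cc \<noteq> y 1"
  shows "\<And>j. j \<le> D \<Longrightarrow> d (v j) cc = (if j \<le> i then i - j else j - i) + 1"
    and "d cc (y 1) = 2" and "d (y 3) cc = 4" and "cc \<noteq> y 3" and "d cc u = Suc lm"
proof -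
  have y1V: "y 1 \<in> V" "y 2 \<in> V" "y 3 \<in> V" using yV l3' by auto
  have ne: "\<And>s. s \<le> lm \<Longrightarrow> cc \<noteq> y s"
  proof -
    fix s assume s: "s \<le> lm"
    show "cc \<noteq> y s"
    proof
      assume ceq: "cc = y s"
      show False
      proof (cases "s \<le> 1")
        case True
        thus False using ceq n1 np y0 vps[OF iD] by (cases s) auto
      next
        case False
        have "d (v i) (y s) = s" using dvy[OF iD s] by simp
        moreover have "d (v i) cc \<le> 1" using gdist_edge[where V=V and E=E, OF vV[OF iD] cV e] .
        ultimately show False using ceq False by simp
      qed
    qed
  qed
  show "cc \<noteq> y 3" using ne l3' by simp
  show "\<And>j. j \<le> D \<Longrightarrow> d (v j) cc = (if j \<le> i then i - j else j - i) + 1"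
  proof -
    fix j assume j: "j \<le> D"
    have "walk V E [v i, cc]" using vV[OF iD] cV e by (simp add: walk_Cons2)
    moreover have "distinct [v i, cc]" using np vps[OF iD] by auto
    moreover have "set [v i, cc] \<inter> set ps \<subseteq> {v i}" using np by auto
    ultimately show "d (v j) cc = (if j \<le> i then i - j else j - i) + 1"
      using off_path[OF iD j, of "[v i, cc]"] by simp
  qed
  have yn: "y 1 \<noteq> v i" "y 2 \<noteq> v i" "y 3 \<noteq> v i" "cc \<noteq> v i" "y 1 \<noteq> y 2" "y 1 \<noteq> y 3" "y 2 \<noteq> y 3"
    using yps[of 1] yps[of 2] yps[of 3] l3' vps[OF iD] np yinj[of 1 2] yinj[of 1 3] yinj[of 2 3] by auto
  have E1: "E (v i) (y 1)" using yE[of 0] y0 l3' by simp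
  have E2: "E (y 1) (y 2)" using yE[of 1] l3' by (simp add: numeral_eq_Suc)
  have E3: "E (y 2) (y 3)" using yE[of 2] l3' by (simp add: numeral_eq_Suc)
  have "walk V E [cc, v i, y 1]" using cV vV[OF iD] y1V e E1 graph_sym[OF g, of "v i" cc]
    by (simp add: walk_Cons2)
  moreover have "distinct [cc, v i, y 1]" using yn n1 by auto
  ultimately show "d cc (y 1) = 2" using tdist[of "[cc, v i, y 1]"] by simp
  have "walk V E [y 3, y 2, y 1, v i, cc]" using cV vV[OF iD] y1V e E1 E2 E3
      graph_sym[OF g, of "v i" "y 1"] graph_sym[OF g, of "y 1" "y 2"] graph_sym[OF g, of "y 2" "y 3"]
    by (simp add: walk_Cons2)
  moreover have "distinct [y 3, y 2, y 1, v i, cc]" using yn n1 ne[of 2] ne[of 3] l3' by auto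
  ultimately show "d (y 3) cc = 4" using tdist[of "[y 3, y 2, y 1, v i, cc]"] by simp
  have "walk V E (cc # w)" using ww cV e graph_sym[OF g, of "v i" cc] wh walk_ne[OF ww]
    by (cases w) (auto simp: walk_Cons2)
  moreover have "distinct (cc # w)"
  proof -
    have "cc \<notin> set w"
    proof
      assume "cc \<in> set w"
      then obtain s where "s < length w" "cc = y s" by (auto simp: in_set_conv_nth)
      thus False using ne wlen by simp
    qed
    thus ?thesis using wd by simp
  qed
  ultimately have "d (hd (cc # w)) (last (cc # w)) = length (cc # w) - 1" by (rule tdist)
  thus "d cc u = Suc lm" using wl wlen walk_ne[OF ww] by simp
qed


lemma psE: "k < D \<Longrightarrow> E (v k) (v (Suc k))" using psw psl unfolding walk_def by auto

lemma yfacts: "y 1 \<in> V" "y 2 \<in> V" "y 3 \<in> V" "y 1 \<notin> set ps" "y 2 \<notin> set ps" "y 3 \<notin> set ps"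
  "y 1 \<noteq> y 2" "y 1 \<noteq> y 3" "y 2 \<noteq> y 3"
  "E (v i) (y 1)" "E (y 1) (y 2)" "E (y 2) (y 3)"
  using yV l3' yps[of 1] yps[of 2] yps[of 3] yinj[of 1 2] yinj[of 1 3] yinj[of 2 3]
    yE[of 0] yE[of 1] yE[of 2] y0 by (auto simp: numeral_eq_Suc)

lemma side_t:
  assumes t: "t \<le> D" "t \<noteq> i" and aV: "a \<in> V" and e: "E (v t) a" and np: "a \<notin> set ps"
  shows "\<And>j. j \<le> D \<Longrightarrow> d (v j) a = (if j \<le> t then t - j else j - t) + 1"
    and "\<And>s. 1 \<le> s \<Longrightarrow> s \<le> lm \<Longrightarrow> a \<noteq> y s"
proof -
  show "\<And>j. j \<le> D \<Longrightarrow> d (v j) a = (if j \<le> t then t - j else j - t) + 1"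
  proof -
    fix j assume j: "j \<le> D"
    have "walk V E [v t, a]" using vV[OF t(1)] aV e by (simp add: walk_Cons2)
    moreover have "distinct [v t, a]" using np vps[OF t(1)] by auto
    moreover have "set [v t, a] \<inter> set ps \<subseteq> {v t}" using np by auto
    ultimately show "d (v j) a = (if j \<le> t then t - j else j - t) + 1"
      using off_path[OF t(1) j, of "[v t, a]"] by simp
  qed
  fix s assume s: "1 \<le> s" "s \<le> lm"
  show "a \<noteq> y s"
  proof
    assume ae: "a = y s"
    have "d (v t) (y s) = (if t \<le> i then i - t else t - i) + s" using dvy[OF t(1) s(2)] .
    moreover have "d (v t) a \<le> 1" using gdist_edge[where V=V and E=E, OF vV[OF t(1)] aV e] .
    ultimately show False using ae s t(2) by (auto split: if_splits)
  qed
qed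

lemma side_U:
  assumes t: "t \<le> D" "t + 1 = i \<or> t = i + 1" and aV: "a \<in> V" and e: "E (v t) a" and np: "a \<notin> set ps"
  shows "d (y 3) a = 5"
proof -
  have ti: "t \<noteq> i" using t by auto
  have ne: "a \<noteq> y 1" "a \<noteq> y 2" "a \<noteq> y 3" using side_t(2)[OF t(1) ti aV e np] l3' by auto
  have Eti: "E (v i) (v t)"
    using t psE[of t] psE[of i] iD graph_sym[OF g, of "v t" "v i"] by auto
  have vne: "v t \<noteq> v i" using vinj[OF t(1) iD] ti by simp
  have "walk V E [y 3, y 2, y 1, v i, v t, a]" using yfacts aV vV[OF iD] vV[OF t(1)] e Eti
      graph_sym[OF g, of "v i" "y 1"] graph_sym[OF g, of "y 1" "y 2"] graph_sym[OF g, of "y 2" "y 3"]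
    by (simp add: walk_Cons2)
  moreover have "distinct [y 3, y 2, y 1, v i, v t, a]"
    using yfacts ne vne np vps[OF iD] vps[OF t(1)] by auto
  ultimately show ?thesis using tdist[of "[y 3, y 2, y 1, v i, v t, a]"] by simp
qed

lemma dsymv: "x \<in> V \<Longrightarrow> j \<le> D \<Longrightarrow> d x (v j) = d (v j) x" using dsym[OF _ vV] by blast

lemma schemeC:
  assumes cV: "cc \<in> V" and e: "E (v i) cc" and np: "cc \<notin> set ps" and n1: "cc \<noteq> y 1"
  shows "\<not> diametrical V E"
proof -
  note sv = side_vi[OF cV e np n1]
  have ii: "3 \<le> i" "i + 3 \<le> D" using i3 iD3 by auto
  have D0: "0 \<le> D" "i - 1 \<le> D" "i + 1 \<le> D" using ii by auto
  let ?o = "[v 0, v D, cc, y 3]" and ?p = "[v (i - 1), v (i + 1), cc, y 1]"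
  have f: "d (v 0) (v (i - 1)) = i - 1" "d (v 0) (v (i+1)) = i + 1" "d (v 0) cc = i + 1"
    "d (v 0) (y 1) = i + 1"
    using dvv'[of 0 "i - 1"] dvv'[of 0 "i+1"] sv(1)[of 0] dvy[of 0 1] ii l3' by auto
  have gg: "d (v D) (v (i + 1)) = D - (i + 1)" "d (v D) (v (i - 1)) = D - i + 1" "d (v D) cc = D - i + 1"
    "d (v D) (y 1) = D - i + 1"
    using dvv'[of D "i + 1"] dvv'[of D "i - 1"] sv(1)[of D] dvy[of D 1] ii l3' by auto
  have h: "d cc cc = 0" "d cc (v (i - 1)) = 2" "d cc (v (i + 1)) = 2" "d cc (y 1) = 2"
    using sv(1)[of "i - 1"] sv(1)[of "i + 1"] sv(2) dsymv[OF cV, of "i - 1"] dsymv[OF cV, of "i + 1"] ii cV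
    by auto
  have k: "d (y 3) (y 1) = 2" "d (y 3) (v (i - 1)) = 4" "d (y 3) (v (i + 1)) = 4" "d (y 3) cc = 4"
    using dyy[of 1 3] dsym[OF yfacts(1) yfacts(3)] dvy[of "i - 1" 3] dvy[of "i + 1" 3]
      dsymv[OF yfacts(3), of "i - 1"] dsymv[OF yfacts(3), of "i + 1"] sv(3) ii l3' by auto
  have dist: "distinct ?o"
    using vinj[of 0 D] vps[of 0] vps[of D] np yfacts sv(4) ii by auto
  have allV: "\<forall>k<4. ?o ! k \<in> V" "\<forall>k<4. ?p ! k \<in> V"
    using vV[of 0] vV[of D] vV[of "i - 1"] vV[of "i + 1"] cV yfacts ii by (auto simp: less4)
  have inj: "inj_on ((!) ?o) {..<4}" using inj_list[OF dist] by (simp add: numeral_eq_Suc)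
  show ?thesis
  proof (rule conclude_strong[OF c _ allV inj])
    show "2 \<le> (4::nat)" by simp
    show "\<forall>k<4. \<forall>j<4. j \<noteq> k \<longrightarrow> d (?o ! k) (?p ! k) + 2 \<le> d (?o ! k) (?p ! j)"
      using f gg h k ii by (simp add: less4) linarith
    show "D < (\<Sum>k<4. max 1 (d (?o ! k) (?p ! k)))"
      using f gg h k ii by (simp add: numeral_eq_Suc max_def) arith
  qed
qed


lemma ab_facts:
  assumes aV: "a \<in> V" and ea: "E (v (i - 1)) a" and na: "a \<notin> set ps"
  shows "\<And>j. j \<le> D \<Longrightarrow> d (v j) a = (if j \<le> i - 1 then i - 1 - j else j - (i - 1)) + 1"
    "d (y 3) a = 5" "a \<noteq> y 1" "a \<noteq> y 3"
    "d (v 0) a = i" "d (v (i - 2)) a = 2" "d (v i) a = 2" "d (v (i + 1)) a = 3" "d (v (i + 2)) a = 4"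
    "d (v D) a = D - i + 2"
proof -
  have ii: "3 \<le> i" "i + 3 \<le> D" using i3 iD3 by auto
  have t: "i - 1 \<le> D" "i - 1 \<noteq> i" "i - 1 + 1 = i \<or> i - 1 = i + 1" using ii by auto
  show "\<And>j. j \<le> D \<Longrightarrow> d (v j) a = (if j \<le> i - 1 then i - 1 - j else j - (i - 1)) + 1"
    using side_t(1)[OF t(1,2) aV ea na] by blast
  show "d (y 3) a = 5" using side_U[OF t(1) t(3) aV ea na] .
  show "a \<noteq> y 1" "a \<noteq> y 3" using side_t(2)[OF t(1,2) aV ea na] l3' by auto
  note S = side_t(1)[OF t(1,2) aV ea na]
  have j: "0 \<le> D" "i - 2 \<le> D" "i \<le> D" "i + 1 \<le> D" "i + 2 \<le> D" "D \<le> D" using ii by auto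
  show "d (v 0) a = i" using S[OF j(1)] ii by (simp split: if_split_asm; arith)
  show "d (v (i - 2)) a = 2" using S[OF j(2)] ii by (simp split: if_split_asm; arith)
  show "d (v i) a = 2" using S[OF j(3)] ii by (simp split: if_split_asm; arith)
  show "d (v (i + 1)) a = 3" using S[OF j(4)] ii by (simp split: if_split_asm; arith)
  show "d (v (i + 2)) a = 4" using S[OF j(5)] ii by (simp split: if_split_asm; arith)
  show "d (v D) a = D - i + 2" using S[OF j(6)] ii by (simp split: if_split_asm; arith)
qed

lemma bb_facts:
  assumes aV: "a \<in> V" and ea: "E (v (i + 1)) a" and na: "a \<notin> set ps"
  shows "\<And>j. j \<le> D \<Longrightarrow> d (v j) a = (if j \<le> i + 1 then i + 1 - j else j - (i + 1)) + 1"
    "d (y 3) a = 5" "a \<noteq> y 1" "a \<noteq> y 3"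
    "d (v 0) a = i + 2" "d (v (i - 2)) a = 4" "d (v i) a = 2" "d (v (i - 1)) a = 3" "d (v (i + 2)) a = 2"
    "d (v D) a = D - i"
proof -
  have ii: "3 \<le> i" "i + 3 \<le> D" using i3 iD3 by auto
  have t: "i + 1 \<le> D" "i + 1 \<noteq> i" "i + 1 + 1 = i \<or> i + 1 = i + 1" using ii by auto
  show "\<And>j. j \<le> D \<Longrightarrow> d (v j) a = (if j \<le> i + 1 then i + 1 - j else j - (i + 1)) + 1"
    using side_t(1)[OF t(1,2) aV ea na] by blast
  show "d (y 3) a = 5" using side_U[OF t(1) t(3) aV ea na] .
  show "a \<noteq> y 1" "a \<noteq> y 3" using side_t(2)[OF t(1,2) aV ea na] l3' by auto
  note S = side_t(1)[OF t(1,2) aV ea na]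
  have j: "0 \<le> D" "i - 2 \<le> D" "i \<le> D" "i - 1 \<le> D" "i + 2 \<le> D" "D \<le> D" using ii by auto
  show "d (v 0) a = i + 2" using S[OF j(1)] ii by (simp split: if_split_asm; arith)
  show "d (v (i - 2)) a = 4" using S[OF j(2)] ii by (simp split: if_split_asm; arith)
  show "d (v i) a = 2" using S[OF j(3)] ii by (simp split: if_split_asm; arith)
  show "d (v (i - 1)) a = 3" using S[OF j(4)] ii by (simp split: if_split_asm; arith)
  show "d (v (i + 2)) a = 2" using S[OF j(5)] ii by (simp split: if_split_asm; arith)
  show "d (v D) a = D - i" using S[OF j(6)] ii by (simp split: if_split_asm; arith)
qed

lemma schemeD:
  assumes aV: "a \<in> V" and ea: "E (v (i - 1)) a" and na: "a \<notin> set ps"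
    and bV: "b \<in> V" and eb: "E (v (i + 1)) b" and nb: "b \<notin> set ps"
  shows "\<not> diametrical V E"
proof -
  note fa = ab_facts[OF aV ea na] and fb = bb_facts[OF bV eb nb]
  have ii: "3 \<le> i" "i + 3 \<le> D" using i3 iD3 by auto
  have ab: "a \<noteq> b"
  proof
    assume "a = b"
    moreover have "d (v (i + 1)) b \<le> 1" using gdist_edge[where V=V and E=E, OF _ bV eb] vV[of "i + 1"] ii by simp
    ultimately have "d (v (i + 1)) a \<le> 1" by simp
    moreover have "d (v (i + 1)) a = 3" using fa(8) .
    ultimately show False by simp
  qed
  have dab: "d a b = 4"
  proof -
    have e1: "E (v (i - 1)) (v i)" "E (v i) (v (i + 1))" using psE[of "i - 1"] psE[of i] ii by auto
    have "walk V E [a, v (i - 1), v i, v (i + 1), b]"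
      using aV bV vV[of "i - 1"] vV[of i] vV[of "i + 1"] ii e1 eb ea graph_sym[OF g, of "v (i - 1)" a]
      by (simp add: walk_Cons2)
    moreover have "distinct [a, v (i - 1), v i, v (i + 1), b]"
      using ab na nb vps[of "i - 1"] vps[of i] vps[of "i + 1"] vinj[of "i - 1" i] vinj[of i "i + 1"]
        vinj[of "i - 1" "i + 1"] ii by auto
    ultimately show ?thesis using tdist[of "[a, v (i - 1), v i, v (i + 1), b]"] by simp
  qed
  let ?o = "[v 0, a, y 3, b, v D]" and ?p = "[v (i - 2), a, v i, b, v (i + 2)]"
  have f: "d (v 0) (v (i - 2)) = i - 2" "d (v 0) a = i" "d (v 0) (v i) = i" "d (v 0) b = i + 2"
    "d (v 0) (v (i + 2)) = i + 2"
    using dvv'[of 0 "i - 2"] dvv'[of 0 i] dvv'[of 0 "i + 2"] fa(5) fb(5) ii by auto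
  have fa2: "d a a = 0" "d a (v (i - 2)) = 2" "d a (v i) = 2" "d a b = 4" "d a (v (i + 2)) = 4"
    using fa(6,7,9) dsymv[OF aV, of "i - 2"] dsymv[OF aV, of i]
      dsymv[OF aV, of "i + 2"] dab aV ii by auto
  have fu: "d (y 3) (v i) = 3" "d (y 3) (v (i - 2)) = 5" "d (y 3) a = 5" "d (y 3) b = 5"
    "d (y 3) (v (i + 2)) = 5"
    using dvy[of i 3] dvy[of "i - 2" 3] dvy[of "i + 2" 3] dsymv[OF yfacts(3), of i]
      dsymv[OF yfacts(3), of "i - 2"] dsymv[OF yfacts(3), of "i + 2"] fa(2) fb(2) ii l3' by auto
  have fb2: "d b b = 0" "d b (v (i - 2)) = 4" "d b a = 4" "d b (v i) = 2" "d b (v (i + 2)) = 2"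
    using fb(6,7,9) dsymv[OF bV, of "i - 2"] dsymv[OF bV, of i]
      dsymv[OF bV, of "i + 2"] dab dsym[OF aV bV] bV ii by auto
  have fD: "d (v D) (v (i + 2)) = D - (i + 2)" "d (v D) (v (i - 2)) = D - i + 2" "d (v D) a = D - i + 2"
    "d (v D) (v i) = D - i" "d (v D) b = D - i"
    using dvv'[of D "i + 2"] dvv'[of D "i - 2"] dvv'[of D i] fa(10) fb(10) ii by auto
  have dist: "distinct ?o"
    using vinj[of 0 D] vps[of 0] vps[of D] na nb ab fa(4) fb(4) yfacts ii by auto
  have allV: "\<forall>k<5. ?o ! k \<in> V" "\<forall>k<5. ?p ! k \<in> V"
    using vV[of 0] vV[of D] vV[of "i - 2"] vV[of i] vV[of "i + 2"] aV bV yfacts ii by (auto simp: less5)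
  have inj: "inj_on ((!) ?o) {..<5}" using inj_list[OF dist] by (simp add: numeral_eq_Suc)
  show ?thesis
  proof (rule conclude_strong[OF c _ allV inj])
    show "2 \<le> (5::nat)" by simp
    show "\<forall>k<5. \<forall>j<5. j \<noteq> k \<longrightarrow> d (?o ! k) (?p ! k) + 2 \<le> d (?o ! k) (?p ! j)"
      using f fa2 fu fb2 fD ii by (simp add: less5) linarith
    show "D < (\<Sum>k<5. max 1 (d (?o ! k) (?p ! k)))"
      using f fa2 fu fb2 fD ii by (simp add: numeral_eq_Suc max_def) arith
  qed
qed

lemma vi_nbrs:
  assumes Hvi: "\<forall>c\<in>V. E (v i) c \<longrightarrow> c \<in> set ps \<or> d c u < lm"
    and yV': "yy \<in> V" and e: "E (v i) yy"
  shows "yy = v (i - 1) \<or> yy = v (i + 1) \<or> yy = y 1"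
proof (cases "yy \<in> set ps")
  case True
  thus ?thesis using nbr_ps[OF iD True e] by auto
next
  case False
  have "yy = y 1"
  proof (rule ccontr)
    assume "yy \<noteq> y 1"
    hence "d yy u = Suc lm" using side_vi(5)[OF yV' e False] by blast
    thus False using Hvi yV' e False by auto
  qed
  thus ?thesis by simp
qed

lemma schemeB:
  assumes aV: "a \<in> V" and ea: "E (v (i - 1)) a" and na: "a \<notin> set ps"
    and Hvi: "\<forall>c\<in>V. E (v i) c \<longrightarrow> c \<in> set ps \<or> d c u < lm"
    and Hp: "\<forall>c\<in>V. E (v (i + 1)) c \<longrightarrow> c \<in> set ps"
  shows "\<not> diametrical V E"
proof -
  note fa = ab_facts[OF aV ea na]
  have ii: "3 \<le> i" "i + 3 \<le> D" using i3 iD3 by auto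
  let ?o = "[v 0, a, y 3, v D]" and ?p = "[v (i - 2), a, v i, v (i + 1)]"
  have f: "d (v 0) (v (i - 2)) = i - 2" "d (v 0) a = i" "d (v 0) (v i) = i" "d (v 0) (v (i + 1)) = i + 1"
    "d (v 0) (v (i - 1)) = i - 1"
    using dvv'[of 0 "i - 2"] dvv'[of 0 i] dvv'[of 0 "i + 1"] dvv'[of 0 "i - 1"] fa(5) ii by auto
  have fa2: "d a a = 0" "d a (v (i - 2)) = 2" "d a (v i) = 2" "d a (v (i + 1)) = 3"
    using fa(6,7,8) dsymv[OF aV, of "i - 2"] dsymv[OF aV, of i]
      dsymv[OF aV, of "i + 1"] aV ii by auto
  have fu: "d (y 3) (v i) = 3" "d (y 3) (v (i - 2)) = 5" "d (y 3) a = 5" "d (y 3) (v (i + 1)) = 4"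
    "d (y 3) (y 1) = 2"
    using dvy[of i 3] dvy[of "i - 2" 3] dvy[of "i + 1" 3] dsymv[OF yfacts(3), of i]
      dsymv[OF yfacts(3), of "i - 2"] dsymv[OF yfacts(3), of "i + 1"] fa(2) ii l3'
      dyy[of 1 3] dsym[OF yfacts(1) yfacts(3)] by auto
  have fD: "d (v D) (v (i + 1)) = D - (i + 1)" "d (v D) (v (i - 2)) = D - i + 2" "d (v D) a = D - i + 2"
    "d (v D) (v i) = D - i" "d (v D) (v (i + 2)) = D - (i + 2)"
    using dvv'[of D "i + 1"] dvv'[of D "i - 2"] dvv'[of D i] dvv'[of D "i + 2"] fa(10) ii by auto
  have dist: "distinct ?o"
    using vinj[of 0 D] vps[of 0] vps[of D] na fa(4) yfacts ii by auto
  have allV: "\<forall>k<4. ?o ! k \<in> V" "\<forall>k<4. ?p ! k \<in> V"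
    using vV[of 0] vV[of D] vV[of "i - 2"] vV[of i] vV[of "i + 1"] aV yfacts ii by (auto simp: less4)
  have inj: "inj_on ((!) ?o) {..<4}" using inj_list[OF dist] by (simp add: numeral_eq_Suc)
  let ?Q = "\<lambda>yy. \<exists>k<4. \<forall>j<4. j \<noteq> k \<longrightarrow> d (?o ! k) yy < d (?o ! k) (?p ! j)"
  have K0: "?Q yy" if "d (v 0) yy < i" for yy
    using that f by (intro exI[of _ 0]) (simp add: less4)
  have K1: "?Q yy" if "d a yy < 2" for yy
    using that fa2 by (intro exI[of _ 1]) (simp add: less4)
  have K2: "?Q yy" if "d (y 3) yy < 4" for yy
    using that fu by (intro exI[of _ 2]) (simp add: less4)
  have K3: "?Q yy" if "d (v D) yy < D - i" for yy
    using that fD ii by (intro exI[of _ 3]) (simp add: less4)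
  show ?thesis
  proof (rule conclude[OF c _ allV inj])
    show "2 \<le> (4::nat)" by simp
    show "\<forall>k<4. \<forall>j<4. j \<noteq> k \<longrightarrow> max 1 (d (?o ! k) (?p ! k)) < d (?o ! k) (?p ! j)"
      using f fa2 fu fD ii by (simp add: less4 max_def) arith
    show "D < (\<Sum>k<4. max 1 (d (?o ! k) (?p ! k)))"
      using f fa2 fu fD ii by (simp add: numeral_eq_Suc max_def) arith
    show "\<forall>yy\<in>V. (\<exists>j<4. d yy (?p ! j) \<le> 1) \<longrightarrow> ?Q yy"
    proof (intro ballI impI)
      fix yy assume yV': "yy \<in> V" and "\<exists>j<4. d yy (?p ! j) \<le> 1"
      hence cs: "d yy (v (i - 2)) \<le> 1 \<or> d yy a \<le> 1 \<or> d yy (v i) \<le> 1 \<or> d yy (v (i + 1)) \<le> 1"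
        unfolding ex4 by simp
      have vs: "v (i - 2) \<in> V" "v (i - 1) \<in> V" "v i \<in> V" "v (i + 1) \<in> V" "v (i + 2) \<in> V"
        using vV ii by auto
      show "?Q yy"
      proof -
        { assume h: "d yy (v (i - 2)) \<le> 1"
          have "d (v 0) yy \<le> d (v 0) (v (i - 2)) + d (v (i - 2)) yy" using dtri vV[of 0] vs yV' by blast
          moreover have "d (v (i - 2)) yy = d yy (v (i - 2))" using dsym vs yV' by blast
          ultimately have "d (v 0) yy < i" using h f ii by simp
          hence ?thesis by (rule K0) }
        moreover
        { assume h: "d yy a \<le> 1"
          hence "d a yy < 2" using dsym[OF aV yV'] by simp
          hence ?thesis by (rule K1) }
        moreover
        { assume h: "d yy (v i) \<le> 1"
          hence "yy = v i \<or> E (v i) yy" using close_cases[OF c yV' vs(3)] by blast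
          hence "yy = v i \<or> yy = v (i - 1) \<or> yy = v (i + 1) \<or> yy = y 1" using vi_nbrs[OF Hvi yV'] by blast
          moreover
          { assume "yy = v i" hence ?thesis using K2 fu by simp }
          moreover
          { assume "yy = y 1" hence ?thesis using K2 fu by simp }
          moreover
          { assume "yy = v (i - 1)" hence ?thesis using K0 f ii by simp }
          moreover
          { assume "yy = v (i + 1)" hence ?thesis using K3 fD ii by simp }
          ultimately have ?thesis by blast }
        moreover
        { assume h: "d yy (v (i + 1)) \<le> 1"
          hence "yy = v (i + 1) \<or> E (v (i + 1)) yy" using close_cases[OF c yV' vs(4)] by blast
          moreover
          { assume "E (v (i + 1)) yy"
            hence "yy \<in> set ps" using Hp yV' by blast
            hence "yy = v i \<or> yy = v (i + 2)" using nbr_ps[OF _ _ \<open>E (v (i + 1)) yy\<close>] ii by auto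
            moreover
            { assume "yy = v i" hence ?thesis using K2 fu by simp }
            moreover
            { assume "yy = v (i + 2)" hence ?thesis using K3 fD ii by simp }
            ultimately have ?thesis by blast }
          moreover
          { assume "yy = v (i + 1)" hence ?thesis using K3 fD ii by simp }
          ultimately have ?thesis by blast }
        ultimately show ?thesis using cs by blast
      qed
    qed
  qed
qed

lemma schemeA:
  assumes Hvi: "\<forall>c\<in>V. E (v i) c \<longrightarrow> c \<in> set ps \<or> d c u < lm"
    and Hm: "\<forall>c\<in>V. E (v (i - 1)) c \<longrightarrow> c \<in> set ps"
    and Hp: "\<forall>c\<in>V. E (v (i + 1)) c \<longrightarrow> c \<in> set ps"
  shows "\<not> diametrical V E"
proof -
  have ii: "3 \<le> i" "i + 3 \<le> D" using i3 iD3 by auto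
  let ?o = "[v 0, y 3, v D]" and ?p = "[v (i - 1), v i, v (i + 1)]"
  have f: "d (v 0) (v (i - 1)) = i - 1" "d (v 0) (v i) = i" "d (v 0) (v (i + 1)) = i + 1"
    "d (v 0) (v (i - 2)) = i - 2"
    using dvv'[of 0 "i - 2"] dvv'[of 0 i] dvv'[of 0 "i + 1"] dvv'[of 0 "i - 1"] ii by auto
  have fu: "d (y 3) (v i) = 3" "d (y 3) (v (i - 1)) = 4" "d (y 3) (v (i + 1)) = 4"
    "d (y 3) (y 1) = 2"
    using dvy[of i 3] dvy[of "i - 1" 3] dvy[of "i + 1" 3] dsymv[OF yfacts(3), of i]
      dsymv[OF yfacts(3), of "i - 1"] dsymv[OF yfacts(3), of "i + 1"] ii l3'
      dyy[of 1 3] dsym[OF yfacts(1) yfacts(3)] by auto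
  have fD: "d (v D) (v (i + 1)) = D - (i + 1)" "d (v D) (v (i - 1)) = D - i + 1"
    "d (v D) (v i) = D - i" "d (v D) (v (i + 2)) = D - (i + 2)"
    using dvv'[of D "i + 1"] dvv'[of D "i - 1"] dvv'[of D i] dvv'[of D "i + 2"] ii by auto
  have dist: "distinct ?o"
    using vinj[of 0 D] vps[of 0] vps[of D] yfacts ii by auto
  have allV: "\<forall>k<3. ?o ! k \<in> V" "\<forall>k<3. ?p ! k \<in> V"
    using vV[of 0] vV[of D] vV[of "i - 1"] vV[of i] vV[of "i + 1"] yfacts ii by (auto simp: less3)
  have inj: "inj_on ((!) ?o) {..<3}" using inj_list[OF dist] by (simp add: numeral_eq_Suc)
  let ?Q = "\<lambda>yy. \<exists>k<3. \<forall>j<3. j \<noteq> k \<longrightarrow> d (?o ! k) yy < d (?o ! k) (?p ! j)"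
  have K0: "?Q yy" if "d (v 0) yy < i" for yy
    using that f by (intro exI[of _ 0]) (simp add: less3)
  have K1: "?Q yy" if "d (y 3) yy < 4" for yy
    using that fu by (intro exI[of _ 1]) (simp add: less3)
  have K2: "?Q yy" if "d (v D) yy < D - i" for yy
    using that fD ii by (intro exI[of _ 2]) (simp add: less3)
  show ?thesis
  proof (rule conclude[OF c _ allV inj])
    show "2 \<le> (3::nat)" by simp
    show "\<forall>k<3. \<forall>j<3. j \<noteq> k \<longrightarrow> max 1 (d (?o ! k) (?p ! k)) < d (?o ! k) (?p ! j)"
      using f fu fD ii by (simp add: less3 max_def) arith
    show "D < (\<Sum>k<3. max 1 (d (?o ! k) (?p ! k)))"
      using f fu fD ii by (simp add: numeral_eq_Suc max_def) arith
    show "\<forall>yy\<in>V. (\<exists>j<3. d yy (?p ! j) \<le> 1) \<longrightarrow> ?Q yy"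
    proof (intro ballI impI)
      fix yy assume yV': "yy \<in> V" and "\<exists>j<3. d yy (?p ! j) \<le> 1"
      hence cs: "d yy (v (i - 1)) \<le> 1 \<or> d yy (v i) \<le> 1 \<or> d yy (v (i + 1)) \<le> 1"
        unfolding ex3 by simp
      have vs: "v (i - 2) \<in> V" "v (i - 1) \<in> V" "v i \<in> V" "v (i + 1) \<in> V" "v (i + 2) \<in> V"
        using vV ii by auto
      have m1: "i - 1 - 1 = i - 2" "i - 1 + 1 = i" using ii by auto
      show "?Q yy"
      proof -
        { assume h: "d yy (v (i - 1)) \<le> 1"
          hence "yy = v (i - 1) \<or> E (v (i - 1)) yy" using close_cases[OF c yV' vs(2)] by blast
          moreover
          { assume "E (v (i - 1)) yy"
            hence "yy \<in> set ps" using Hm yV' by blast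
            hence "yy = v (i - 2) \<or> yy = v i"
              using nbr_ps[OF _ _ \<open>E (v (i - 1)) yy\<close>] ii m1 by auto
            moreover
            { assume "yy = v (i - 2)" hence ?thesis using K0 f ii by simp }
            moreover
            { assume "yy = v i" hence ?thesis using K1 fu by simp }
            ultimately have ?thesis by blast }
          moreover
          { assume "yy = v (i - 1)" hence ?thesis using K0 f ii by simp }
          ultimately have ?thesis by blast }
        moreover
        { assume h: "d yy (v i) \<le> 1"
          hence "yy = v i \<or> E (v i) yy" using close_cases[OF c yV' vs(3)] by blast
          hence "yy = v i \<or> yy = v (i - 1) \<or> yy = v (i + 1) \<or> yy = y 1" using vi_nbrs[OF Hvi yV'] by blast
          moreover
          { assume "yy = v i" hence ?thesis using K1 fu by simp }
          moreover
          { assume "yy = y 1" hence ?thesis using K1 fu by simp }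
          moreover
          { assume "yy = v (i - 1)" hence ?thesis using K0 f ii by simp }
          moreover
          { assume "yy = v (i + 1)" hence ?thesis using K2 fD ii by simp }
          ultimately have ?thesis by blast }
        moreover
        { assume h: "d yy (v (i + 1)) \<le> 1"
          hence "yy = v (i + 1) \<or> E (v (i + 1)) yy" using close_cases[OF c yV' vs(4)] by blast
          moreover
          { assume "E (v (i + 1)) yy"
            hence "yy \<in> set ps" using Hp yV' by blast
            hence "yy = v i \<or> yy = v (i + 2)" using nbr_ps[OF _ _ \<open>E (v (i + 1)) yy\<close>] ii by auto
            moreover
            { assume "yy = v i" hence ?thesis using K1 fu by simp }
            moreover
            { assume "yy = v (i + 2)" hence ?thesis using K2 fD ii by simp }
            ultimately have ?thesis by blast }
          moreover
          { assume "yy = v (i + 1)" hence ?thesis using K2 fD ii by simp }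
          ultimately have ?thesis by blast }
        ultimately show ?thesis using cs by blast
      qed
    qed
  qed
qed

end



theorem mainTheorem8:
  fixes V :: "'a set" and E :: "'a \<Rightarrow> 'a \<Rightarrow> bool" and ps :: "'a list"
    and u :: 'a and i :: nat
  assumes "tree V E"
    and "diametral_path V E ps"
    and "protrudes V E ps u i"
    and "gdist V E u (ps ! i) > 2"
  shows "\<not> diametrical V E"
proof -
  interpret L: dconf V E ps u i using assms by unfold_locales
  have ii: "3 \<le> i" "i + 3 \<le> diam V E" using L.i3 L.iD3 by auto
  have lm: "L.lm = gdist V E u (ps ! i)" by (simp add: L.lm_def)
  show ?thesis
  proof (cases "\<exists>c\<in>V. E (ps ! i) c \<and> c \<notin> set ps \<and> \<not> gdist V E c u < L.lm")
    case True
    then obtain c where c: "c \<in> V" "E (ps ! i) c" "c \<notin> set ps" "\<not> gdist V E c u < L.lm" by blast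
    have "gdist V E (L.y 1) (L.y L.lm) = L.lm - 1" using L.dyy[of 1 L.lm] L.l3' by simp
    hence "gdist V E (L.y 1) u < L.lm" using L.yl L.l3' by simp
    hence "c \<noteq> L.y 1" using c(4) by auto
    thus ?thesis using L.schemeC[OF c(1-3)] by blast
  next
    case False
    hence Hvi: "\<forall>c\<in>V. E (ps ! i) c \<longrightarrow> c \<in> set ps \<or> gdist V E c u < L.lm" by blast
    show ?thesis
    proof (cases "\<exists>a\<in>V. E (ps ! (i - 1)) a \<and> a \<notin> set ps")
      case A: True
      then obtain a where a: "a \<in> V" "E (ps ! (i - 1)) a" "a \<notin> set ps" by blast
      show ?thesis
      proof (cases "\<exists>b\<in>V. E (ps ! (i + 1)) b \<and> b \<notin> set ps")
        case True
        then obtain b where b: "b \<in> V" "E (ps ! (i + 1)) b" "b \<notin> set ps" by blast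
        show ?thesis using L.schemeD[OF a b] .
      next
        case False
        hence "\<forall>c\<in>V. E (ps ! (i + 1)) c \<longrightarrow> c \<in> set ps" by blast
        thus ?thesis using L.schemeB[OF a Hvi] by blast
      qed
    next
      case NA: False
      hence Hm: "\<forall>c\<in>V. E (ps ! (i - 1)) c \<longrightarrow> c \<in> set ps" by blast
      show ?thesis
      proof (cases "\<exists>b\<in>V. E (ps ! (i + 1)) b \<and> b \<notin> set ps")
        case False
        hence "\<forall>c\<in>V. E (ps ! (i + 1)) c \<longrightarrow> c \<in> set ps" by blast
        thus ?thesis using L.schemeA[OF Hvi Hm] by blast
      next
        case True
        then obtain b where b: "b \<in> V" "E (ps ! (i + 1)) b" "b \<notin> set ps" by blast
        let ?D = "diam V E"
        have len: "length ps = Suc ?D" using L.psl .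
        have rn: "\<And>j. j \<le> ?D \<Longrightarrow> rev ps ! j = ps ! (?D - j)"
          using len by (simp add: rev_nth)
        have dpr: "diametral_path V E (rev ps)"
        proof -
          have "walk V E (rev ps)" using walk_rev[OF L.g L.psw] .
          moreover have "distinct (rev ps)" using L.psd by simp
          moreover have "length (rev ps) = Suc ?D" using len by simp
          moreover have "gdist V E (hd (rev ps)) (last (rev ps)) = ?D"
          proof -
            have ne: "ps \<noteq> []" using len by auto
            have "hd ps \<in> V" "last ps \<in> V" using walk_set[OF L.psw] ne by auto
            hence "gdist V E (last ps) (hd ps) = gdist V E (hd ps) (last ps)" using L.dsym by blast
            thus ?thesis using L.psD ne by (simp add: hd_rev last_rev)
          qed
          ultimately show ?thesis unfolding diametral_path_def by blast
        qed
        have prr: "protrudes V E (rev ps) u (?D - i)"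
          unfolding protrudes_def
        proof (intro conjI allI impI)
          show "u \<in> V" using L.uV .
          show "u \<notin> set (rev ps)" using L.unps by simp
          show "?D - i < length (rev ps)" using len by simp
          fix j assume j: "j < length (rev ps)" "j \<noteq> ?D - i"
          hence j': "j \<le> ?D" "?D - j \<noteq> i" using len ii by auto
          have "rev ps ! (?D - i) = ps ! i" using rn[of "?D - i"] ii by simp
          moreover have "rev ps ! j = ps ! (?D - j)" using rn[OF j'(1)] .
          ultimately show "gdist V E u (rev ps ! (?D - i)) < gdist V E u (rev ps ! j)"
            using L.prot[of "?D - j"] j' by simp
        qed
        have ri: "rev ps ! (?D - i) = ps ! i" using rn[of "?D - i"] ii by simp
        have l3r: "gdist V E u (rev ps ! (?D - i)) > 2" using assms(4) ri by simp
        interpret R: dconf V E "rev ps" u "?D - i" using assms(1) dpr prr l3r by unfold_locales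
        have rlm: "R.lm = L.lm" unfolding R.lm_def L.lm_def using ri by simp
        have r1: "rev ps ! (?D - i - 1) = ps ! (i + 1)" using rn[of "?D - i - 1"] ii by simp
        have r2: "rev ps ! (?D - i + 1) = ps ! (i - 1)" using rn[of "?D - i + 1"] ii by simp
        have b': "E (rev ps ! (?D - i - 1)) b" "b \<notin> set (rev ps)" using b r1 by auto
        have Hvi': "\<forall>c\<in>V. E (rev ps ! (?D - i)) c \<longrightarrow> c \<in> set (rev ps) \<or> gdist V E c u < R.lm"
          using Hvi ri rlm by simp
        have Hp': "\<forall>c\<in>V. E (rev ps ! (?D - i + 1)) c \<longrightarrow> c \<in> set (rev ps)"
          using Hm r2 by simp
        show ?thesis using R.schemeB[OF b(1) b' Hvi' Hp'] .
      qed
    qed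
  qed
qed


end
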